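(* Let $P$ be a distribution on $\mathcal X\times\mathcal Y$ with every $\mathbf x\in\mathcal X\subseteq\mathbb R^d$ satisfying $\|\mathbf x\|\le1$ and $\mathcal Y=\{-1,+1\}$ or $[-1,1]$; let $(\mathbf x_i,y_i)_{i=1}^n$ be i.i.d. from $P$. Let $R>0$, $\mathscr W=\{\mathbf w:\|\mathbf w\|\le R\}$, $\ell:\mathbb R\to\mathbb R_+$ convex, $\alpha$-exp-concave on $|z|\le R$, $|\ell'|\le G$, $\mathcal L(\mathbf w)=\mathrm E[\ell(y\mathbf w^\top\mathbf x)]$, $\mathbf w_*\in\arg\min_{\mathscr W}\mathcal L$, $\mathbf H=\mathrm E[\mathbf x\mathbf x^\top]$. Let $\mathbf w_1,\dots,\mathbf w_n$ be the iterates of the algorithm in the context, $A=\sum_{i=1}^n\|\mathbf w_i-\mathbf w_*\|_{\mathbf H}^2$ and $\Delta_3=\sum_{i=1}^n\left(\left[(\mathbf w_i-\mathbf w_* )^\top\mathbf x_i\right]^2-\|\mathbf w_i-\mathbf w_*\|_{\mathbf H}^2\right)$. Then for any $t>0$, \[ \Pr\left(A\le\frac{4R^2}n\right)+\Pr\left(\Delta_3\le8R^2t+A\right)\ge1-me^{-t}, \] where $m=\lceil2\log_2n\rceil$.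
   Context: $\|\mathbf w\|_{\mathbf H}^2=\mathbf w^\top\mathbf H\mathbf w$. Algorithm with inputs $\eta_1>0$, $a>0$: $\mathbf w_1=\mathbf 0$, $\mathbf M_0=a\mathbf I$; for $i=1,\dots,n$: $\mathbf M_i=\mathbf M_{i-1}+\mathbf x_i\mathbf x_i^\top$, $\mathbf Z_i=\mathbf M_i/i$, $\mathbf v_i=\ell'(y_i\mathbf w_i^\top\mathbf x_i)\mathbf x_i$, $\eta_i=\eta_1/i$, $\mathbf w_{i+1}=\arg\min_{\mathbf w\in\mathscr W}\eta_i\langle\mathbf w,\mathbf v_i\rangle+\frac12(\mathbf w-\mathbf w_i)^\top\mathbf Z_i(\mathbf w-\mathbf w_i)$. *)

theory Defs
  imports "HOL-Probability.Probability"
begin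

definition Hnorm2 :: "real^'d^'d \<Rightarrow> real^'d \<Rightarrow> real" where
  "Hnorm2 H w = w \<bullet> (H *v w)"

definition outer :: "real^'d \<Rightarrow> real^'d^'d" where
  "outer x = (\<chi> j k. x$j * x$k)"

definition second_moment :: "((real^'d) \<times> real) measure \<Rightarrow> real^'d^'d" where
  "second_moment P = (\<chi> j k. \<integral> p. (fst p)$j * (fst p)$k \<partial>P)"

definition exp_loss :: "(real \<Rightarrow> real) \<Rightarrow> ((real^'d) \<times> real) measure \<Rightarrow> real^'d \<Rightarrow> real" where
  "exp_loss l P w = (\<integral> p. l (snd p * (w \<bullet> fst p)) \<partial>P)"

definition exp_concave_on :: "real \<Rightarrow> real set \<Rightarrow> (real \<Rightarrow> real) \<Rightarrow> bool" where
  "exp_concave_on \<alpha> S f \<longleftrightarrow> concave_on S (\<lambda>z. exp (- \<alpha> * f z))"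

text \<open>The matrix M_i = a I + sum_{j=1..i} x_j x_j^T, where the sample is
  \<omega> j = (x_j, y_j) for j = 1..n.\<close>
fun Mmat :: "real \<Rightarrow> (nat \<Rightarrow> (real^'d) \<times> real) \<Rightarrow> nat \<Rightarrow> real^'d^'d" where
  "Mmat a \<omega> 0 = a *\<^sub>R mat 1"
| "Mmat a \<omega> (Suc i) = Mmat a \<omega> i + outer (fst (\<omega> (Suc i)))"

definition ons_step :: "real \<Rightarrow> real \<Rightarrow> real \<Rightarrow> (real \<Rightarrow> real) \<Rightarrow>
    (nat \<Rightarrow> (real^'d) \<times> real) \<Rightarrow> nat \<Rightarrow> real^'d \<Rightarrow> real^'d" where
  "ons_step R \<eta>1 a l' \<omega> i wi =
     (let xi = fst (\<omega> i); yi = snd (\<omega> i);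
          vi = l' (yi * (wi \<bullet> xi)) *\<^sub>R xi;
          \<eta>i = \<eta>1 / real i;
          Zi = (1 / real i) *\<^sub>R Mmat a \<omega> i;
          obj = (\<lambda>w. \<eta>i * (w \<bullet> vi) + 1/2 * ((w - wi) \<bullet> (Zi *v (w - wi))))
      in SOME w'. norm w' \<le> R \<and> (\<forall>w. norm w \<le> R \<longrightarrow> obj w' \<le> obj w))"

text \<open>Iterates: ons_iter ... i = w_i for i \<ge> 1 (w_1 = 0); index 0 is unused.\<close>
fun ons_iter :: "real \<Rightarrow> real \<Rightarrow> real \<Rightarrow> (real \<Rightarrow> real) \<Rightarrow>
    (nat \<Rightarrow> (real^'d) \<times> real) \<Rightarrow> nat \<Rightarrow> real^'d" where
  "ons_iter R \<eta>1 a l' \<omega> 0 = 0"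
| "ons_iter R \<eta>1 a l' \<omega> (Suc i) =
     (if i = 0 then 0 else ons_step R \<eta>1 a l' \<omega> i (ons_iter R \<eta>1 a l' \<omega> i))"

end

theory Submission imports Defs begin

definition Fobj :: "real^'d \<Rightarrow> real^'d \<Rightarrow> real^'d^'d \<Rightarrow> real^'d \<Rightarrow> real" where
  "Fobj c w0 Z w = w \<bullet> c + 1/2 * ((w - w0) \<bullet> (Z *v (w - w0)))"

lemma quad_sum: "(x::real^'d) \<bullet> (Z *v y) = (\<Sum>j\<in>UNIV. \<Sum>k\<in>UNIV. x$j * Z$j$k * y$k)"
  by (simp add: inner_vec_def matrix_vector_mult_def sum_distrib_left mult.assoc)

lemma qmid: fixes Z :: "real^'n^'n" shows "((1/2) *\<^sub>R (d1 + d2)) \<bullet> (Z *v ((1/2) *\<^sub>R (d1 + d2)))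
   = (d1 \<bullet> (Z *v d1) + d2 \<bullet> (Z *v d2))/2 - 1/4 * ((d1 - d2) \<bullet> (Z *v (d1 - d2)))"
proof -
  have "Z *v ((1/2) *\<^sub>R (d1 + d2)) = (1/2) *\<^sub>R (Z *v d1 + Z *v d2)"
    by (simp only: matrix_vector_mult_scaleR matrix_vector_right_distrib)
  moreover have "Z *v (d1 - d2) = Z *v d1 - Z *v d2" by (rule matrix_vector_mult_diff_distrib)
  ultimately show ?thesis
    by (simp add: inner_add_left inner_add_right inner_diff_left inner_diff_right algebra_simps)
qed

lemma Fobj_mid:
  "Fobj c w0 Z ((1/2) *\<^sub>R (w1 + w2)) = (Fobj c w0 Z w1 + Fobj c w0 Z w2)/2
     - 1/8 * ((w1 - w2) \<bullet> (Z *v (w1 - w2)))"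
proof -
  have e1: "(1/2) *\<^sub>R (w1 + w2) - w0 = (1/2) *\<^sub>R ((w1 - w0) + (w2 - w0))" by (simp add: vec_eq_iff algebra_simps)
  have e2: "w1 - w2 = (w1 - w0) - (w2 - w0)" by simp
  have e3: "((1/2) *\<^sub>R (w1 + w2)) \<bullet> c = (w1 \<bullet> c + w2 \<bullet> c)/2" by (simp add: inner_add_left)
  show ?thesis unfolding Fobj_def e1 e3 qmid
    by (simp add: field_simps)
qed

lemma cont_Fobj: "continuous_on S (\<lambda>(p::(real^'d) \<times> (real^'d) \<times> (real^'d^'d), w::real^'d).
     Fobj (fst p) (fst (snd p)) (snd (snd p)) w)"
  unfolding Fobj_def quad_sum case_prod_beta
  by (intro continuous_intros)

definition Fp :: "(real^'d) \<times> (real^'d) \<times> (real^'d^'d) \<Rightarrow> real^'d \<Rightarrow> real" where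
  "Fp p w = Fobj (fst p) (fst (snd p)) (snd (snd p)) w"

definition Gp :: "real \<Rightarrow> (real^'d) \<times> (real^'d) \<times> (real^'d^'d) \<Rightarrow> real^'d" where
  "Gp R p = (SOME w'. norm w' \<le> R \<and> (\<forall>w. norm w \<le> R \<longrightarrow> Fp p w' \<le> Fp p w))"

definition PD :: "((real^'d) \<times> (real^'d) \<times> (real^'d^'d)) set" where
  "PD = {p. \<forall>v. v \<noteq> 0 \<longrightarrow> 0 < v \<bullet> (snd (snd p) *v v)}"

lemma cont_Fp: "continuous_on UNIV (\<lambda>x. Fp (f x) (g x))" if "continuous_on UNIV f" "continuous_on UNIV g"
proof -
  have "continuous_on UNIV ((\<lambda>(p, w). Fobj (fst p) (fst (snd p)) (snd (snd p)) w) \<circ> (\<lambda>x. (f x, g x)))"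
    by (intro continuous_on_compose continuous_intros that cont_Fobj)
  then show ?thesis by (simp add: Fp_def comp_def)
qed

lemma Gp_ex:
  assumes "R \<ge> 0"
  shows "norm (Gp R p) \<le> R \<and> (\<forall>w. norm w \<le> R \<longrightarrow> Fp p (Gp R p) \<le> Fp p w)"
proof -
  have "continuous_on (cball 0 R) (Fp p)"
    using cont_Fp[of "\<lambda>_. p" "\<lambda>x. x"] by (auto intro: continuous_on_subset continuous_intros)
  then obtain x where "x \<in> cball 0 R" "\<forall>y\<in>cball 0 R. Fp p x \<le> Fp p y"
    using continuous_attains_inf[of "cball 0 R" "Fp p"] assms by auto
  then have "\<exists>w'. norm w' \<le> R \<and> (\<forall>w. norm w \<le> R \<longrightarrow> Fp p w' \<le> Fp p w)" by auto
  then show ?thesis unfolding Gp_def by (rule someI_ex)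
qed

lemma aux_lin: "(a::real) = (b+c)/2 - 1/8*X \<Longrightarrow> b \<le> c \<Longrightarrow> c \<le> b \<Longrightarrow> b \<le> a \<Longrightarrow> 1/8*X \<le> 0"
  by (simp add: field_simps)
lemma Gp_norm: "R \<ge> 0 \<Longrightarrow> norm (Gp R p) \<le> R" using Gp_ex by blast
lemma Gp_min: "R \<ge> 0 \<Longrightarrow> norm w \<le> R \<Longrightarrow> Fp p (Gp R p) \<le> Fp p w" using Gp_ex by blast

lemma Gp_unique:
  assumes p: "p \<in> PD" and w: "norm w \<le> R" and wm: "\<forall>v. norm v \<le> R \<longrightarrow> Fp p w \<le> Fp p v"
  shows "w = Gp R p"
proof (rule ccontr)
  assume ne: "w \<noteq> Gp R p"
  have R: "R \<ge> 0" using w norm_ge_zero order_trans by blast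
  define g where "g = Gp R p"
  have g: "norm g \<le> R" "\<forall>v. norm v \<le> R \<longrightarrow> Fp p g \<le> Fp p v" using Gp_ex[OF R, of p] unfolding g_def by auto
  define m where "m = (1/2) *\<^sub>R (w + g)"
  have "norm m \<le> (1/2) * (norm w + norm g)" unfolding m_def by (simp add: norm_triangle_ineq)
  then have mR: "norm m \<le> R" using w g(1) by simp
  have pos: "0 < (w - g) \<bullet> (snd (snd p) *v (w - g))" using p ne unfolding PD_def g_def by auto
  have "Fp p m = (Fp p w + Fp p g)/2 - 1/8 * ((w - g) \<bullet> (snd (snd p) *v (w - g)))"
    unfolding Fp_def m_def by (rule Fobj_mid)
  moreover have "Fp p w \<le> Fp p g" "Fp p g \<le> Fp p w" using wm g w by auto
  moreover have "Fp p w \<le> Fp p m" using wm mR by auto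
  ultimately have "1/8 * ((w - g) \<bullet> (snd (snd p) *v (w - g))) \<le> 0" 
    by (rule aux_lin)
  then show False using pos by linarith
qed

lemma Gp_cont:
  assumes R: "R \<ge> 0"
  shows "continuous_on (PD::((real^'d) \<times> (real^'d) \<times> (real^'d^'d)) set) (Gp R)"
proof -
  let ?K = "cball (0::real^'d) R"
  define C where "C = (\<Inter>v\<in>?K. {x::((real^'d) \<times> (real^'d) \<times> (real^'d^'d)) \<times> (real^'d). Fp (fst x) (snd x) \<le> Fp (fst x) v})"
  have "closed C" unfolding C_def
    by (intro closed_INT ballI closed_Collect_le cont_Fp continuous_intros)
  have geq: "(\<lambda>x. (x, Gp R x)) ` PD = (PD \<times> ?K) \<inter> C"
  proof
    show "(\<lambda>x. (x, Gp R x)) ` PD \<subseteq> PD \<times> ?K \<inter> C"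
      unfolding C_def image_subset_iff by (auto simp: Gp_norm[OF R] intro!: Gp_min[OF R])
    show "PD \<times> ?K \<inter> C \<subseteq> (\<lambda>x. (x, Gp R x)) ` PD"
    proof clarify
      fix p w assume "p \<in> PD" "w \<in> ?K" "(p, w) \<in> C"
      then have "w = Gp R p" by (intro Gp_unique) (auto simp: C_def)
      then show "(p, w) \<in> (\<lambda>x. (x, Gp R x)) ` PD" using \<open>p \<in> PD\<close> by auto
    qed
  qed
  have "closedin (top_of_set (PD \<times> ?K)) ((\<lambda>x. (x, Gp R x)) ` PD)"
    unfolding geq using \<open>closed C\<close> by (simp add: closedin_closed_Int)
  moreover have "Gp R \<in> PD \<rightarrow> ?K" by (auto simp: Gp_norm[OF R])
  ultimately show ?thesis using continuous_closed_graph_eq[of ?K "Gp R" PD] by auto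
qed

lemma deriv_meas:
  fixes l l' :: "real \<Rightarrow> real"
  assumes d: "\<forall>z. (l has_real_derivative l' z) (at z)"
  shows "l' \<in> borel_measurable borel"
proof -
  have cl: "continuous_on UNIV l"
    using d by (meson DERIV_isCont continuous_at_imp_continuous_on)
  define u where "u = (\<lambda>n::nat. \<lambda>x. (l (x + inverse (real (Suc n))) - l x) / inverse (real (Suc n)))"
  show ?thesis
  proof (rule borel_measurable_LIMSEQ_real[where u=u])
    fix n show "u n \<in> borel_measurable borel"
      unfolding u_def
      by (intro borel_measurable_divide borel_measurable_diff borel_measurable_const
          measurable_compose[OF _ borel_measurable_continuous_onI[OF cl]] borel_measurable_add)
         (auto intro: borel_measurable_continuous_onI[OF cl])
  next
    fix x :: real
    have lim: "((\<lambda>y. (l y - l x) / (y - x)) \<longlongrightarrow> l' x) (at x)"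
      using d has_field_derivative_iff by blast
    have s: "filterlim (\<lambda>n::nat. x + inverse (real (Suc n))) (at x) sequentially"
    proof (rule filterlim_atI)
      show "((\<lambda>n::nat. x + inverse (real (Suc n))) \<longlongrightarrow> x) sequentially"
        using tendsto_add[OF tendsto_const LIMSEQ_inverse_real_of_nat, of x] by simp
      show "\<forall>\<^sub>F n in sequentially. x + inverse (real (Suc n)) \<noteq> x" by simp
    qed
    have "((\<lambda>n. (l (x + inverse (real (Suc n))) - l x) / (x + inverse (real (Suc n)) - x)) \<longlongrightarrow> l' x) sequentially"
      using filterlim_compose[OF lim s] by (simp add: comp_def)
    then show "(\<lambda>n. u n x) \<longlonglongrightarrow> l' x" unfolding u_def by simp
  qed
qed

lemma Mmat_dep: "(\<forall>j. 1 \<le> j \<and> j \<le> i \<longrightarrow> \<omega> j = \<omega>' j) \<Longrightarrow> Mmat a \<omega> i = Mmat a \<omega>' i"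
  by (induction i) auto

lemma iter_dep: "(\<forall>j. 1 \<le> j \<and> j < i \<longrightarrow> \<omega> j = \<omega>' j) \<Longrightarrow>
    ons_iter R \<eta>1 a l' \<omega> i = ons_iter R \<eta>1 a l' \<omega>' i"
proof (induction i)
  case (Suc i)
  then have "ons_iter R \<eta>1 a l' \<omega> i = ons_iter R \<eta>1 a l' \<omega>' i" by auto
  moreover have "Mmat a \<omega> i = Mmat a \<omega>' i" using Suc.prems by (intro Mmat_dep) auto
  moreover have "i \<noteq> 0 \<Longrightarrow> \<omega> i = \<omega>' i" using Suc.prems by auto
  ultimately show ?case by (simp add: ons_step_def)
qed simp

definition prm :: "real \<Rightarrow> real \<Rightarrow> (real \<Rightarrow> real) \<Rightarrow> (nat \<Rightarrow> (real^'d) \<times> real) \<Rightarrow> nat \<Rightarrow> real^'d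
   \<Rightarrow> (real^'d) \<times> (real^'d) \<times> (real^'d^'d)" where
  "prm \<eta>1 a l' \<omega> i wi = ((\<eta>1 / real i) *\<^sub>R (l' (snd (\<omega> i) * (wi \<bullet> fst (\<omega> i))) *\<^sub>R fst (\<omega> i)),
      wi, (1 / real i) *\<^sub>R Mmat a \<omega> i)"

lemma ons_step_Gp: "ons_step R \<eta>1 a l' \<omega> i wi = Gp R (prm \<eta>1 a l' \<omega> i wi)"
  unfolding ons_step_def Gp_def Fp_def Fobj_def prm_def Let_def
  by (simp add: inner_scaleR_right mult.assoc)

lemma outer_quad: "v \<bullet> (outer x *v v) = (x \<bullet> v)\<^sup>2"
proof -
  have "v \<bullet> (outer x *v v) = (\<Sum>j\<in>UNIV. \<Sum>k\<in>UNIV. (x$j * v$j) * (x$k * v$k))"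
    unfolding quad_sum outer_def by (simp add: algebra_simps)
  also have "\<dots> = (x \<bullet> v)\<^sup>2"
    by (simp add: power2_eq_square inner_vec_def sum_product)
  finally show ?thesis .
qed

lemma Mmat_quad: "v \<bullet> (Mmat a \<omega> i *v v) \<ge> a * (v \<bullet> v)"
proof (induction i)
  case 0
  then show ?case by (simp add: scaleR_matrix_vector_assoc[symmetric])
next
  case (Suc i)
  then show ?case by (simp add: matrix_vector_mult_add_rdistrib inner_add_right outer_quad add_increasing2)
qed

lemma prm_PD: "a > 0 \<Longrightarrow> i \<ge> 1 \<Longrightarrow> prm \<eta>1 a l' \<omega> i wi \<in> PD"
proof -
  assume a: "a > 0" and i: "i \<ge> 1"
  { fix v :: "real^'a" assume "v \<noteq> 0"
    then have "0 < a * (v \<bullet> v)" using a by simp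
    also have "\<dots> \<le> v \<bullet> (Mmat a \<omega> i *v v)" by (rule Mmat_quad)
    finally have "0 < (1 / real i) * (v \<bullet> (Mmat a \<omega> i *v v))" using i by simp
    then have "0 < v \<bullet> (((1 / real i) *\<^sub>R Mmat a \<omega> i) *v v)"
      by (simp add: scaleR_matrix_vector_assoc[symmetric]) }
  then show ?thesis unfolding PD_def prm_def by auto
qed

lemma iter_norm: "R \<ge> 0 \<Longrightarrow> norm (ons_iter R \<eta>1 a l' \<omega> i) \<le> R"
  by (cases i) (auto simp: ons_step_Gp Gp_norm)

lemma cont_outer: "continuous_on UNIV (outer :: real^'d \<Rightarrow> real^'d^'d)"
  unfolding outer_def by (intro continuous_intros)

context
  fixes P :: "((real^'d) \<times> real) measure"
  assumes P_sets: "sets P = sets borel"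
begin

lemma comp_meas: "j \<in> I \<Longrightarrow> (\<lambda>\<omega>. \<omega> j) \<in> borel_measurable (PiM I (\<lambda>_. P))"
proof -
  assume "j \<in> I"
  then have "(\<lambda>\<omega>. \<omega> j) \<in> measurable (PiM I (\<lambda>_. P)) P" by (rule measurable_component_singleton)
  then show ?thesis by (simp only: measurable_cong_sets[OF refl P_sets])
qed

lemma fst_meas: assumes "j \<in> I" shows "(\<lambda>\<omega>. fst (\<omega> j)) \<in> borel_measurable (PiM I (\<lambda>_. P))"
  by (rule measurable_compose[OF comp_meas[OF assms]]) (intro borel_measurable_continuous_onI continuous_intros)

lemma snd_meas: assumes "j \<in> I" shows "(\<lambda>\<omega>. snd (\<omega> j)) \<in> borel_measurable (PiM I (\<lambda>_. P))"
  by (rule measurable_compose[OF comp_meas[OF assms]]) (intro borel_measurable_continuous_onI continuous_intros)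

lemma Mmat_meas: "{1..i} \<subseteq> I \<Longrightarrow> (\<lambda>\<omega>. Mmat a \<omega> i) \<in> borel_measurable (PiM I (\<lambda>_. P))"
proof (induction i)
  case 0 then show ?case by simp
next
  case (Suc i)
  have "{1..i} \<subseteq> {1..Suc i}" by auto
  then have IH: "(\<lambda>\<omega>. Mmat a \<omega> i) \<in> borel_measurable (PiM I (\<lambda>_. P))" using Suc by blast
  have "(\<lambda>\<omega>. outer (fst (\<omega> (Suc i)))) \<in> borel_measurable (PiM I (\<lambda>_. P))"
  proof (rule measurable_compose[OF fst_meas borel_measurable_continuous_onI[OF cont_outer]])
    show "Suc i \<in> I" using Suc.prems by auto
  qed
  then show ?case using IH by simp
qed

lemma iter_meas:
  assumes R: "R \<ge> 0" and a: "a > 0" and l'm: "l' \<in> borel_measurable borel"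
  shows "{1..<i} \<subseteq> I \<Longrightarrow> (\<lambda>\<omega>. ons_iter R \<eta>1 a l' \<omega> i) \<in> borel_measurable (PiM I (\<lambda>_. P))"
proof (induction i)
  case 0 then show ?case by simp
next
  case (Suc i)
  show ?case
  proof (cases "i = 0")
    case True then show ?thesis by simp
  next
    case False
    then have iI: "i \<in> I" using Suc.prems by auto
    have IH[measurable]: "(\<lambda>\<omega>. ons_iter R \<eta>1 a l' \<omega> i) \<in> borel_measurable (PiM I (\<lambda>_. P))"
      using Suc.IH Suc.prems by fastforce
    have [measurable]: "(\<lambda>\<omega>. fst (\<omega> i)) \<in> borel_measurable (PiM I (\<lambda>_. P))"
         "(\<lambda>\<omega>. snd (\<omega> i)) \<in> borel_measurable (PiM I (\<lambda>_. P))"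
         "(\<lambda>\<omega>. Mmat a \<omega> i) \<in> borel_measurable (PiM I (\<lambda>_. P))"
    proof -
      have "{1..i} \<subseteq> I" using Suc.prems by auto
      then show "(\<lambda>\<omega>. fst (\<omega> i)) \<in> borel_measurable (PiM I (\<lambda>_. P))"
         "(\<lambda>\<omega>. snd (\<omega> i)) \<in> borel_measurable (PiM I (\<lambda>_. P))"
         "(\<lambda>\<omega>. Mmat a \<omega> i) \<in> borel_measurable (PiM I (\<lambda>_. P))"
        using fst_meas[OF iI] snd_meas[OF iI] Mmat_meas[of i I] by auto
    qed
    have l'c: "(\<lambda>\<omega>. l' (snd (\<omega> i) * (ons_iter R \<eta>1 a l' \<omega> i \<bullet> fst (\<omega> i))))
        \<in> borel_measurable (PiM I (\<lambda>_. P))"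
      by (rule measurable_compose[OF _ l'm]) measurable
    have pm: "(\<lambda>\<omega>. prm \<eta>1 a l' \<omega> i (ons_iter R \<eta>1 a l' \<omega> i)) \<in> borel_measurable (PiM I (\<lambda>_. P))"
      unfolding prm_def using l'c by measurable
    have pm': "(\<lambda>\<omega>. prm \<eta>1 a l' \<omega> i (ons_iter R \<eta>1 a l' \<omega> i)) \<in> measurable (PiM I (\<lambda>_. P)) (restrict_space borel PD)"
      by (rule measurable_restrict_space2[OF _ pm]) (use False in \<open>auto intro!: prm_PD[OF a]\<close>)
    have "(\<lambda>\<omega>. Gp R (prm \<eta>1 a l' \<omega> i (ons_iter R \<eta>1 a l' \<omega> i))) \<in> borel_measurable (PiM I (\<lambda>_. P))"
      using measurable_comp[OF pm' borel_measurable_continuous_on_restrict[OF Gp_cont[OF R]]] by (simp add: comp_def)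
    then show ?thesis using False by (simp add: ons_step_Gp)
  qed
qed

end


lemma sq_inner_sum: "((v::real^'d) \<bullet> x)\<^sup>2 = (\<Sum>j\<in>UNIV. \<Sum>k\<in>UNIV. (v$j * v$k) * (x$j * x$k))"
  by (simp add: power2_eq_square inner_vec_def sum_product algebra_simps)

lemma cont_Hnorm2: "continuous_on UNIV (Hnorm2 H)"
  unfolding Hnorm2_def by (intro continuous_intros)

context
  fixes P :: "((real^'d) \<times> real) measure"
  assumes P_prob: "prob_space P" and P_sets: "sets P = sets borel"
    and P_supp: "AE p in P. norm (fst p) \<le> 1 \<and> snd p \<in> {-1..1}"
begin

lemma bmP: "f \<in> borel_measurable borel \<Longrightarrow> f \<in> borel_measurable P"
  by (simp only: measurable_cong_sets[OF P_sets refl])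

lemma ijint: "integrable P (\<lambda>p. fst p $ j * fst p $ k)"
proof -
  interpret prob_space P by (rule P_prob)
  show ?thesis
  proof (rule integrable_const_bound[where B=1])
    show "AE p in P. norm (fst p $ j * fst p $ k) \<le> 1"
      using P_supp
    proof eventually_elim
      case (elim p)
      have "\<bar>fst p $ j\<bar> \<le> 1" "\<bar>fst p $ k\<bar> \<le> 1"
        using component_le_norm_cart[of "fst p"] elim by (meson order_trans)+
      then show ?case by (simp add: abs_mult mult_le_one)
    qed
    show "(\<lambda>p. fst p $ j * fst p $ k) \<in> borel_measurable P"
      by (intro bmP borel_measurable_continuous_onI continuous_intros)
  qed
qed

lemma Hq: "Hnorm2 (second_moment P) v = (\<integral>p. (v \<bullet> fst p)\<^sup>2 \<partial>P)"
proof -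
  have "Hnorm2 (second_moment P) v = (\<Sum>j\<in>UNIV. \<Sum>k\<in>UNIV. (v$j * v$k) * (\<integral>p. fst p $ j * fst p $ k \<partial>P))"
    unfolding Hnorm2_def quad_sum second_moment_def by (simp add: algebra_simps)
  also have "\<dots> = (\<integral>p. (\<Sum>j\<in>UNIV. \<Sum>k\<in>UNIV. (v$j * v$k) * (fst p $ j * fst p $ k)) \<partial>P)"
    by (simp add: integral_sum integrable_sum ijint)
  also have "\<dots> = (\<integral>p. (v \<bullet> fst p)\<^sup>2 \<partial>P)"
    by (simp add: sq_inner_sum)
  finally show ?thesis .
qed

lemma sqint: "integrable P (\<lambda>p. (v \<bullet> fst p)\<^sup>2)"
  unfolding sq_inner_sum by (simp add: integrable_sum ijint)

lemma Hq_le: "Hnorm2 (second_moment P) v \<le> (norm v)\<^sup>2"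
proof -
  interpret prob_space P by (rule P_prob)
  have "(\<integral>p. (v \<bullet> fst p)\<^sup>2 \<partial>P) \<le> (\<integral>p. (norm v)\<^sup>2 \<partial>P)"
  proof (rule integral_mono_AE[OF sqint])
    show "AE p in P. (v \<bullet> fst p)\<^sup>2 \<le> (norm v)\<^sup>2"
      using P_supp
    proof eventually_elim
      case (elim p)
      have "\<bar>v \<bullet> fst p\<bar> \<le> norm v * norm (fst p)" by (rule Cauchy_Schwarz_ineq2)
      also have "\<dots> \<le> norm v" using elim by (simp add: mult_left_le)
      finally show ?case by (metis abs_le_square_iff abs_norm_cancel)
    qed
  qed simp
  then show ?thesis by (simp add: Hq prob_space)
qed

lemma exp_half_le: "0 \<le> s \<Longrightarrow> s \<le> 1 \<Longrightarrow> exp (s/2) \<le> 1 + (s::real)"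
proof -
  assume s: "0 \<le> s" "s \<le> 1"
  have "exp (s/2) \<le> 1 + s/2 + (s/2)\<^sup>2" using s by (intro exp_bound) auto
  also have "\<dots> \<le> 1 + s" using s by (simp add: power2_eq_square field_simps) (smt (verit) mult_left_le)
  finally show ?thesis .
qed

lemma exp_step:
  assumes b: "b > 0" and u: "AE p in P. (u \<bullet> fst p)\<^sup>2 \<le> b"
  shows "(\<integral>\<^sup>+ p. ennreal (exp ((u \<bullet> fst p)\<^sup>2/(2*b) - Hnorm2 (second_moment P) u / b)) \<partial>P) \<le> 1"
proof -
  interpret prob_space P by (rule P_prob)
  define \<mu> where "\<mu> = Hnorm2 (second_moment P) u"
  have mu: "\<mu> = (\<integral>p. (u \<bullet> fst p)\<^sup>2 \<partial>P)" unfolding \<mu>_def by (rule Hq)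
  have "(\<integral>\<^sup>+ p. ennreal (exp ((u \<bullet> fst p)\<^sup>2/(2*b) - \<mu> / b)) \<partial>P)
      \<le> (\<integral>\<^sup>+ p. ennreal (exp (- \<mu> / b) * (1 + (u \<bullet> fst p)\<^sup>2 / b)) \<partial>P)"
  proof (rule nn_integral_mono_AE)
    show "AE p in P. ennreal (exp ((u \<bullet> fst p)\<^sup>2/(2*b) - \<mu> / b))
        \<le> ennreal (exp (- \<mu> / b) * (1 + (u \<bullet> fst p)\<^sup>2 / b))"
      using u
    proof eventually_elim
      case (elim p)
      define s where "s = (u \<bullet> fst p)\<^sup>2 / b"
      have s: "0 \<le> s" "s \<le> 1" unfolding s_def using elim b by auto
      have "exp ((u \<bullet> fst p)\<^sup>2/(2*b) - \<mu> / b) = exp (- \<mu> / b) * exp (s/2)"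
        unfolding s_def by (simp add: exp_add[symmetric] field_simps)
      also have "\<dots> \<le> exp (- \<mu> / b) * (1 + s)" using exp_half_le[OF s] by simp
      finally show ?case unfolding s_def by (rule ennreal_leI)
    qed
  qed
  also have "\<dots> = ennreal (\<integral>p. exp (- \<mu> / b) * (1 + (u \<bullet> fst p)\<^sup>2 / b) \<partial>P)"
    by (rule nn_integral_eq_integral) (use b in \<open>auto simp: sqint intro!: AE_I2\<close>)
  also have "(\<integral>p. exp (- \<mu> / b) * (1 + (u \<bullet> fst p)\<^sup>2 / b) \<partial>P) = exp (- \<mu> / b) * (1 + \<mu> / b)"
    by (simp add: mu sqint prob_space)
  also have "exp (- \<mu> / b) * (1 + \<mu> / b) \<le> exp (- \<mu> / b) * exp (\<mu> / b)"
    by (intro mult_left_mono exp_ge_add_one_self) auto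
  also have "\<dots> = 1" by (simp add: exp_add[symmetric])
  finally show ?thesis unfolding \<mu>_def by (metis ennreal_leI ennreal_1)
qed

end


definition Sfun :: "real \<Rightarrow> real \<Rightarrow> real \<Rightarrow> (real \<Rightarrow> real) \<Rightarrow> real^'d^'d \<Rightarrow> real^'d \<Rightarrow> nat
    \<Rightarrow> (nat \<Rightarrow> (real^'d) \<times> real) \<Rightarrow> real" where
  "Sfun R \<eta>1 a l' H ws n \<omega> = (\<Sum>i=1..n. ((ons_iter R \<eta>1 a l' \<omega> i - ws) \<bullet> fst (\<omega> i))\<^sup>2 / (2 * (4 * R\<^sup>2))
       - Hnorm2 H (ons_iter R \<eta>1 a l' \<omega> i - ws) / (4 * R\<^sup>2))"

context
  fixes P :: "((real^'d) \<times> real) measure" and R \<eta>1 a :: real and l' :: "real \<Rightarrow> real" and ws :: "real^'d"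
  assumes P_prob: "prob_space P" and P_sets: "sets P = sets borel"
    and P_supp: "AE p in P. norm (fst p) \<le> 1 \<and> snd p \<in> {-1..1}"
    and R_pos: "R > 0" and a_pos: "a > 0" and l'm: "l' \<in> borel_measurable borel" and ws: "norm ws \<le> R"
begin

lemma term_meas:
  assumes "i \<in> I" "{1..<i} \<subseteq> I"
  shows "(\<lambda>\<omega>. ((ons_iter R \<eta>1 a l' \<omega> i - ws) \<bullet> fst (\<omega> i))\<^sup>2) \<in> borel_measurable (PiM I (\<lambda>_. P))"
    and "(\<lambda>\<omega>. Hnorm2 H (ons_iter R \<eta>1 a l' \<omega> i - ws)) \<in> borel_measurable (PiM I (\<lambda>_. P))"
proof -
  have [measurable]: "(\<lambda>\<omega>. ons_iter R \<eta>1 a l' \<omega> i) \<in> borel_measurable (PiM I (\<lambda>_. P))"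
    using iter_meas[OF P_sets _ a_pos l'm, of R] R_pos assms(2) by simp
  have [measurable]: "(\<lambda>\<omega>. fst (\<omega> i)) \<in> borel_measurable (PiM I (\<lambda>_. P))"
    using fst_meas[OF P_sets assms(1)] .
  show "(\<lambda>\<omega>. ((ons_iter R \<eta>1 a l' \<omega> i - ws) \<bullet> fst (\<omega> i))\<^sup>2) \<in> borel_measurable (PiM I (\<lambda>_. P))"
    by measurable
  have "(\<lambda>\<omega>. ons_iter R \<eta>1 a l' \<omega> i - ws) \<in> borel_measurable (PiM I (\<lambda>_. P))" by measurable
  then show "(\<lambda>\<omega>. Hnorm2 H (ons_iter R \<eta>1 a l' \<omega> i - ws)) \<in> borel_measurable (PiM I (\<lambda>_. P))"
    using measurable_compose[OF _ borel_measurable_continuous_onI[OF cont_Hnorm2]] by blast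
qed

lemma Sfun_meas:
  assumes "{1..n} \<subseteq> I"
  shows "Sfun R \<eta>1 a l' H ws n \<in> borel_measurable (PiM I (\<lambda>_. P))"
proof -
  have "(\<lambda>\<omega>. \<Sum>i=1..n. ((ons_iter R \<eta>1 a l' \<omega> i - ws) \<bullet> fst (\<omega> i))\<^sup>2 / (2 * (4 * R\<^sup>2))
       - Hnorm2 H (ons_iter R \<eta>1 a l' \<omega> i - ws) / (4 * R\<^sup>2)) \<in> borel_measurable (PiM I (\<lambda>_. P))"
  proof (rule borel_measurable_sum)
    fix i assume i: "i \<in> {1..n}"
    then have "i \<in> I" "{1..<i} \<subseteq> I" using assms by auto
    note tm = term_meas(1)[OF this] term_meas(2)[OF this, of H]
    show "(\<lambda>\<omega>. ((ons_iter R \<eta>1 a l' \<omega> i - ws) \<bullet> fst (\<omega> i))\<^sup>2 / (2 * (4 * R\<^sup>2))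
       - Hnorm2 H (ons_iter R \<eta>1 a l' \<omega> i - ws) / (4 * R\<^sup>2)) \<in> borel_measurable (PiM I (\<lambda>_. P))"
      using tm by measurable
  qed
  then show ?thesis unfolding Sfun_def[abs_def] .
qed

lemma Sfun_upd:
  "Sfun R \<eta>1 a l' H ws (Suc n) (fun_upd \<omega> (Suc n) y) = Sfun R \<eta>1 a l' H ws n \<omega>
     + ((ons_iter R \<eta>1 a l' \<omega> (Suc n) - ws) \<bullet> fst y)\<^sup>2 / (2 * (4 * R\<^sup>2))
     - Hnorm2 H (ons_iter R \<eta>1 a l' \<omega> (Suc n) - ws) / (4 * R\<^sup>2)"
proof -
  have it: "ons_iter R \<eta>1 a l' (fun_upd \<omega> (Suc n) y) i = ons_iter R \<eta>1 a l' \<omega> i" if "i \<le> Suc n" for i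
    by (rule iter_dep) (use that in auto)
  have "Sfun R \<eta>1 a l' H ws n (fun_upd \<omega> (Suc n) y) = Sfun R \<eta>1 a l' H ws n \<omega>"
    unfolding Sfun_def by (intro sum.cong refl) (auto simp: it)
  then show ?thesis
    unfolding Sfun_def by (simp add: it)
qed

lemma exp_Sfun_le: "(\<integral>\<^sup>+ \<omega>. ennreal (exp (Sfun R \<eta>1 a l' (second_moment P) ws n \<omega>)) \<partial>(PiM {1..n} (\<lambda>_. P))) \<le> 1"
proof (induction n)
  case 0
  interpret Q: prob_space "PiM ({}::nat set) (\<lambda>_. P)" by (rule prob_space_PiM) (rule P_prob)
  show ?case by (simp add: Sfun_def Q.emeasure_space_1)
next
  case (Suc n)
  interpret PS: product_sigma_finite "\<lambda>_::nat. P"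
    by (simp add: product_sigma_finite_def prob_space_imp_sigma_finite P_prob)
  interpret prob_space P by (rule P_prob)
  let ?S = "Sfun R \<eta>1 a l' (second_moment P) ws"
  have ins: "{1..Suc n} = insert (Suc n) {1..n}" by auto
  have fm: "(\<lambda>\<omega>. ennreal (exp (?S (Suc n) \<omega>))) \<in> borel_measurable (PiM (insert (Suc n) {1..n}) (\<lambda>_. P))"
  proof -
    have Sm[measurable]: "?S (Suc n) \<in> borel_measurable (PiM (insert (Suc n) {1..n}) (\<lambda>_. P))"
      by (rule Sfun_meas) auto
    show ?thesis by measurable
  qed
  have "(\<integral>\<^sup>+ \<omega>. ennreal (exp (?S (Suc n) \<omega>)) \<partial>(PiM {1..Suc n} (\<lambda>_. P)))
     = (\<integral>\<^sup>+ \<omega>. (\<integral>\<^sup>+ y. ennreal (exp (?S (Suc n) (fun_upd \<omega> (Suc n) y))) \<partial>P) \<partial>(PiM {1..n} (\<lambda>_. P)))"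
    unfolding ins by (rule PS.product_nn_integral_insert[OF _ _ fm]) auto
  also have "\<dots> \<le> (\<integral>\<^sup>+ \<omega>. ennreal (exp (?S n \<omega>)) \<partial>(PiM {1..n} (\<lambda>_. P)))"
  proof (rule nn_integral_mono)
    fix \<omega>
    define u where "u = ons_iter R \<eta>1 a l' \<omega> (Suc n) - ws"
    define b where "b = 4 * R\<^sup>2"
    have b: "b > 0" unfolding b_def using R_pos by simp
    have nu: "norm u \<le> 2 * R"
      unfolding u_def using iter_norm[of R \<eta>1 a l' \<omega> "Suc n"] R_pos ws norm_triangle_ineq4[of "ons_iter R \<eta>1 a l' \<omega> (Suc n)" ws]
      by linarith
    have ae: "AE p in P. (u \<bullet> fst p)\<^sup>2 \<le> b"
      using P_supp
    proof eventually_elim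
      case (elim p)
      have "\<bar>u \<bullet> fst p\<bar> \<le> norm u * norm (fst p)" by (rule Cauchy_Schwarz_ineq2)
      also have "\<dots> \<le> 2 * R * 1" using elim nu R_pos by (intro mult_mono) auto
      finally have "\<bar>u \<bullet> fst p\<bar> \<le> 2 * R" by simp
      then have "\<bar>u \<bullet> fst p\<bar>\<^sup>2 \<le> (2 * R)\<^sup>2" by (intro power_mono) auto
      then show ?case unfolding b_def by (simp add: power_mult_distrib)
    qed
    have T: "(\<integral>\<^sup>+ p. ennreal (exp ((u \<bullet> fst p)\<^sup>2/(2*b) - Hnorm2 (second_moment P) u / b)) \<partial>P) \<le> 1"
      by (rule exp_step[OF P_prob P_sets P_supp b ae])
    have mT: "(\<lambda>p. ennreal (exp ((u \<bullet> fst p)\<^sup>2/(2*b) - Hnorm2 (second_moment P) u / b))) \<in> borel_measurable P"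
      by (intro measurable_compose[OF _ measurable_ennreal] bmP[OF P_prob P_sets P_supp] borel_measurable_continuous_onI continuous_intros) (use b in auto)
    have "(\<integral>\<^sup>+ y. ennreal (exp (?S (Suc n) (fun_upd \<omega> (Suc n) y))) \<partial>P)
        = (\<integral>\<^sup>+ y. ennreal (exp (?S n \<omega>)) * ennreal (exp ((u \<bullet> fst y)\<^sup>2/(2*b) - Hnorm2 (second_moment P) u / b)) \<partial>P)"
      unfolding Sfun_upd u_def b_def
      by (intro nn_integral_cong) (simp add: ennreal_mult[symmetric] exp_add[symmetric] algebra_simps)
    also have "\<dots> = ennreal (exp (?S n \<omega>)) * (\<integral>\<^sup>+ p. ennreal (exp ((u \<bullet> fst p)\<^sup>2/(2*b) - Hnorm2 (second_moment P) u / b)) \<partial>P)"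
      by (rule nn_integral_cmult[OF mT])
    also have "\<dots> \<le> ennreal (exp (?S n \<omega>)) * 1"
      by (intro mult_left_mono T) auto
    finally show "(\<integral>\<^sup>+ y. ennreal (exp (?S (Suc n) (fun_upd \<omega> (Suc n) y))) \<partial>P) \<le> ennreal (exp (?S n \<omega>))" by simp
  qed
  also have "\<dots> \<le> 1" by (rule Suc.IH)
  finally show ?case .
qed

lemma markov_S:
  "measure (PiM {1..n} (\<lambda>_. P)) {\<omega> \<in> space (PiM {1..n} (\<lambda>_. P)). t < Sfun R \<eta>1 a l' (second_moment P) ws n \<omega>}
     \<le> exp (- t)"
proof -
  let ?Q = "PiM {1..n} (\<lambda>_. P)"
  let ?S = "Sfun R \<eta>1 a l' (second_moment P) ws n"
  interpret Q: prob_space ?Q by (rule prob_space_PiM) (rule P_prob)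
  have Sm[measurable]: "?S \<in> borel_measurable ?Q" by (rule Sfun_meas) auto
  have E: "{\<omega> \<in> space ?Q. t < ?S \<omega>} \<in> sets ?Q" by measurable
  have "emeasure ?Q {\<omega> \<in> space ?Q. t < ?S \<omega>} = (\<integral>\<^sup>+ \<omega>. indicator {\<omega> \<in> space ?Q. t < ?S \<omega>} \<omega> \<partial>?Q)"
    using E by simp
  also have "\<dots> \<le> (\<integral>\<^sup>+ \<omega>. ennreal (exp (- t)) * ennreal (exp (?S \<omega>)) \<partial>?Q)"
  proof (rule nn_integral_mono)
    fix \<omega> assume "\<omega> \<in> space ?Q"
    show "indicator {\<omega> \<in> space ?Q. t < ?S \<omega>} \<omega> \<le> ennreal (exp (- t)) * ennreal (exp (?S \<omega>))"
    proof (cases "t < ?S \<omega>")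
      case True
      then have "1 \<le> exp (- t) * exp (?S \<omega>)" by (simp add: exp_add[symmetric])
      then show ?thesis using True \<open>\<omega> \<in> space ?Q\<close>
        by (simp add: ennreal_mult[symmetric] ennreal_leI flip: ennreal_1)
    qed simp
  qed
  also have "\<dots> = ennreal (exp (- t)) * (\<integral>\<^sup>+ \<omega>. ennreal (exp (?S \<omega>)) \<partial>?Q)"
    by (rule nn_integral_cmult) measurable
  also have "\<dots> \<le> ennreal (exp (- t)) * 1"
    by (intro mult_left_mono exp_Sfun_le) auto
  finally have "emeasure ?Q {\<omega> \<in> space ?Q. t < ?S \<omega>} \<le> ennreal (exp (- t))" by simp
  then show ?thesis by (subst (asm) Q.emeasure_eq_measure) simp
qed

end

theorem lemma7:
  fixes P :: "((real^'d) \<times> real) measure"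
    and n :: nat and R \<alpha> G \<eta>1 a t :: real
    and l l' :: "real \<Rightarrow> real"
    and wstar :: "real^'d"
  assumes P_prob: "prob_space P"
    and P_sets: "sets P = sets borel"
    and P_supp: "AE p in P. norm (fst p) \<le> 1 \<and> snd p \<in> {-1..1}"
    and R_pos: "R > 0"
    and l_nonneg: "\<forall>z. l z \<ge> 0"
    and l_convex: "convex_on UNIV l"
    and l_deriv: "\<forall>z. (l has_real_derivative l' z) (at z)"
    and l_expconc: "\<alpha> > 0" "exp_concave_on \<alpha> {-R..R} l"
    and l_lip: "\<forall>z. \<bar>l' z\<bar> \<le> G"
    and wstar_in: "norm wstar \<le> R"
    and wstar_min: "\<forall>w. norm w \<le> R \<longrightarrow> exp_loss l P wstar \<le> exp_loss l P w"
    and eta_pos: "\<eta>1 > 0" and a_pos: "a > 0"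
    and t_pos: "t > 0"
  shows "(let Q = PiM {1..n} (\<lambda>_. P);
              H = second_moment P;
              w = ons_iter R \<eta>1 a l';
              A = (\<lambda>\<omega>. \<Sum>i=1..n. Hnorm2 H (w \<omega> i - wstar));
              \<Delta>3 = (\<lambda>\<omega>. \<Sum>i=1..n. ((w \<omega> i - wstar) \<bullet> fst (\<omega> i))\<^sup>2
                                   - Hnorm2 H (w \<omega> i - wstar));
              m = \<lceil>2 * log 2 (real n)\<rceil>
          in measure Q {\<omega> \<in> space Q. A \<omega> \<le> 4 * R\<^sup>2 / real n}
             + measure Q {\<omega> \<in> space Q. \<Delta>3 \<omega> \<le> 8 * R\<^sup>2 * t + A \<omega>}
             \<ge> 1 - real_of_int m * exp (- t))"
proof -
  have l'm: "l' \<in> borel_measurable borel" using deriv_meas l_deriv by blast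
  define Q where "Q = PiM {1..n} (\<lambda>_. P)"
  define H where "H = second_moment P"
  define A where "A = (\<lambda>\<omega>. \<Sum>i=1..n. Hnorm2 H (ons_iter R \<eta>1 a l' \<omega> i - wstar))"
  define D where "D = (\<lambda>\<omega>. \<Sum>i=1..n. ((ons_iter R \<eta>1 a l' \<omega> i - wstar) \<bullet> fst (\<omega> i))\<^sup>2
                                   - Hnorm2 H (ons_iter R \<eta>1 a l' \<omega> i - wstar))"
  define m where "m = \<lceil>2 * log 2 (real n)\<rceil>"
  interpret Q: prob_space Q unfolding Q_def by (rule prob_space_PiM) (rule P_prob)
  let ?S = "Sfun R \<eta>1 a l' H wstar n"
  have R2: "R\<^sup>2 > 0" using R_pos by simp
  have key: "D \<omega> \<le> 8 * R\<^sup>2 * t + A \<omega> \<longleftrightarrow> \<not> t < ?S \<omega>" for \<omega>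
  proof -
    let ?Y = "\<lambda>i. ((ons_iter R \<eta>1 a l' \<omega> i - wstar) \<bullet> fst (\<omega> i))\<^sup>2"
    let ?m = "\<lambda>i. Hnorm2 H (ons_iter R \<eta>1 a l' \<omega> i - wstar)"
    have e1: "D \<omega> - A \<omega> = (\<Sum>i=1..n. ?Y i - 2 * ?m i)"
      unfolding D_def A_def sum_subtractf[symmetric] by (rule sum.cong) auto
    have e2: "?S \<omega> = (\<Sum>i=1..n. ?Y i - 2 * ?m i) / (8 * R\<^sup>2)"
      unfolding Sfun_def sum_divide_distrib by (rule sum.cong) (use R2 in \<open>auto simp: field_simps\<close>)
    have "D \<omega> \<le> 8 * R\<^sup>2 * t + A \<omega> \<longleftrightarrow> D \<omega> - A \<omega> \<le> t * (8 * R\<^sup>2)" by (simp add: algebra_simps)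
    also have "\<dots> \<longleftrightarrow> (D \<omega> - A \<omega>) / (8 * R\<^sup>2) \<le> t" using R2 by (simp add: pos_divide_le_eq)
    finally show ?thesis unfolding e2 e1[symmetric] by auto
  qed
  have Sm[measurable]: "?S \<in> borel_measurable Q"
    unfolding Q_def by (rule Sfun_meas[OF P_prob P_sets P_supp R_pos a_pos l'm wstar_in]) auto
  have E: "{\<omega> \<in> space Q. t < ?S \<omega>} \<in> sets Q" by measurable
  have seteq: "{\<omega> \<in> space Q. D \<omega> \<le> 8 * R\<^sup>2 * t + A \<omega>} = space Q - {\<omega> \<in> space Q. t < ?S \<omega>}"
    using key by auto
  have mk: "measure Q {\<omega> \<in> space Q. t < ?S \<omega>} \<le> exp (- t)"
    unfolding Q_def H_def by (rule markov_S[OF P_prob P_sets P_supp R_pos a_pos l'm wstar_in])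
  have E2: "measure Q {\<omega> \<in> space Q. D \<omega> \<le> 8 * R\<^sup>2 * t + A \<omega>} \<ge> 1 - exp (- t)"
    unfolding seteq using Q.prob_compl[OF E] mk by simp
  have fin: "measure Q {\<omega> \<in> space Q. A \<omega> \<le> 4 * R\<^sup>2 / real n}
             + measure Q {\<omega> \<in> space Q. D \<omega> \<le> 8 * R\<^sup>2 * t + A \<omega>} \<ge> 1 - real_of_int m * exp (- t)"
  proof (cases "n \<ge> 2")
    case True
    have "1 \<le> log 2 (real n)" using True by (subst le_log_iff) auto
    then have "(1::int) \<le> m" unfolding m_def by (simp add: le_ceiling_iff)
    then have "exp (- t) \<le> real_of_int m * exp (- t)"
      by (metis mult_1 mult_right_mono exp_ge_zero of_int_le_iff of_int_1)
    then show ?thesis using E2 measure_nonneg[of Q "{\<omega> \<in> space Q. A \<omega> \<le> 4 * R\<^sup>2 / real n}"] by linarith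
  next
    case False
    then have n: "n = 0 \<or> n = 1" by auto
    have m0: "m = 0" using n unfolding m_def by (auto simp: log_def)
    have "A \<omega> \<le> 4 * R\<^sup>2 / real n" for \<omega>
      using n
    proof
      assume "n = 0" then show ?thesis by (simp add: A_def)
    next
      assume n1: "n = 1"
      have "A \<omega> = Hnorm2 H (- wstar)" unfolding A_def n1 by simp
      also have "\<dots> \<le> (norm (- wstar))\<^sup>2" unfolding H_def by (rule Hq_le[OF P_prob P_sets P_supp])
      also have "\<dots> \<le> R\<^sup>2" using wstar_in by (simp add: power_mono)
      also have "\<dots> \<le> 4 * R\<^sup>2 / real n" using n1 R2 by simp
      finally show ?thesis .
    qed
    then have "{\<omega> \<in> space Q. A \<omega> \<le> 4 * R\<^sup>2 / real n} = space Q" by auto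
    then show ?thesis using m0 Q.prob_space
      measure_nonneg[of Q "{\<omega> \<in> space Q. D \<omega> \<le> 8 * R\<^sup>2 * t + A \<omega>}"] by simp
  qed
  then show ?thesis unfolding Let_def Q_def H_def A_def D_def m_def by simp
qed

end
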